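(* For $2\le p\le\infty$, \[ \limsup_{d\to\infty}\frac{\mathrm{rad}(\mathbb D_p^d)}{\sqrt d\,L_{\mathbb D_p^d}}\le\sqrt3. \]
   Context: $\mathbb B_p^d=\{x\in\mathbb R^d:\|x\|_p\le1\}$ and $\mathbb D_p^d=\mathbb B_p^d/\mathrm{vol}_d(\mathbb B_p^d)^{1/d}$. For a symmetric set $A$, $\mathrm{rad}(A)=\sup_{y\in A}\|y\|_2$. For an isotropic convex body $K$ (volume one, centroid at the origin), the isotropic constant $L_K>0$ is defined by $\int_K\langle x,\theta\rangle^2\,dx=L_K^2$ for all $\theta\in\mathbb S^{d-1}$; $\mathbb D_p^d$ is isotropic. *)

theory Defs
  imports "HOL-Analysis.Analysis"
begin

text \<open>Vectors in R^d are represented as extensional functions nat => real on {..<d};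
  Lebesgue measure on R^d is the product measure of d copies of lborel.\<close>

definition Leb :: "nat \<Rightarrow> (nat \<Rightarrow> real) measure" where
  "Leb d = PiM {..<d} (\<lambda>_. lborel)"

definition pnorm :: "ereal \<Rightarrow> nat \<Rightarrow> (nat \<Rightarrow> real) \<Rightarrow> real" where
  "pnorm p d x = (if p = \<infinity> then Max (insert 0 ((\<lambda>i. \<bar>x i\<bar>) ` {..<d}))
                  else (\<Sum>i<d. \<bar>x i\<bar> powr real_of_ereal p) powr (1 / real_of_ereal p))"

definition Bp :: "nat \<Rightarrow> ereal \<Rightarrow> (nat \<Rightarrow> real) set" where
  "Bp d p = {x \<in> space (Leb d). pnorm p d x \<le> 1}"

definition Dp :: "nat \<Rightarrow> ereal \<Rightarrow> (nat \<Rightarrow> real) set" where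
  "Dp d p = (\<lambda>x. restrict (\<lambda>i. x i / measure (Leb d) (Bp d p) powr (1 / real d)) {..<d}) ` Bp d p"

definition rad :: "nat \<Rightarrow> (nat \<Rightarrow> real) set \<Rightarrow> real" where
  "rad d A = Sup ((\<lambda>y. sqrt (\<Sum>i<d. (y i)\<^sup>2)) ` A)"

definition isotropic_constant :: "nat \<Rightarrow> (nat \<Rightarrow> real) set \<Rightarrow> real" where
  "isotropic_constant d K = (THE L. L > 0 \<and> (\<forall>\<theta>::nat \<Rightarrow> real. (\<Sum>i<d. (\<theta> i)\<^sup>2) = 1 \<longrightarrow>
      (LINT x:K|Leb d. (\<Sum>i<d. x i * \<theta> i)\<^sup>2) = L\<^sup>2))"

end

theory Submission
  imports Defs
begin

lemma lborel_preimage_mult: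
  fixes c :: real assumes c: "c > 0" and A: "A \<in> sets lborel"
  shows "emeasure lborel {x. c * x \<in> A} = ennreal (1/c) * emeasure lborel A"
proof -
  have "emeasure (distr lborel borel ((*) c)) A = emeasure (density lborel (\<lambda>_. inverse \<bar>c\<bar>)) A"
    using lborel_distr_mult[of c] c by simp
  also have "\<dots> = ennreal (1/c) * emeasure lborel A"
    using A c by (simp add: emeasure_density_const field_simps)
  finally show ?thesis using A by (simp add: emeasure_distr vimage_def)
qed

lemma PiM_scale:
  fixes c :: real assumes c: "c > 0" and I: "finite I"
  shows "scale_measure (ennreal (c ^ card I))
           (distr (PiM I (\<lambda>_. lborel)) (PiM I (\<lambda>_. lborel)) (\<lambda>x. restrict (\<lambda>i. c * x i) I))
         = PiM I (\<lambda>_. lborel)"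
proof -
  interpret product_sigma_finite "\<lambda>_. lborel" by standard
  have meas: "(\<lambda>x. restrict (\<lambda>i. c * x i) I) \<in> PiM I (\<lambda>_. lborel) \<rightarrow>\<^sub>M PiM I (\<lambda>_. lborel)"
    by measurable
  show ?thesis
  proof (rule PiM_eqI[OF I])
    show "sets (scale_measure (ennreal (c ^ card I))
           (distr (PiM I (\<lambda>_. lborel)) (PiM I (\<lambda>_. lborel)) (\<lambda>x. restrict (\<lambda>i. c * x i) I))) = sets (PiM I (\<lambda>_. lborel))"
      by simp
  next
    fix A :: "_ \<Rightarrow> real set" assume A: "\<And>i. i \<in> I \<Longrightarrow> A i \<in> sets lborel"
    have pre: "(\<lambda>x. restrict (\<lambda>i. c * x i) I) -` Pi\<^sub>E I A \<inter> space (PiM I (\<lambda>_. lborel))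
           = Pi\<^sub>E I (\<lambda>i. {x. c * x \<in> A i})"
      by (auto simp: space_PiM PiE_def Pi_def extensional_def)
    have "PiE I A \<in> sets (PiM I (\<lambda>_. lborel))" using A I by (intro sets_PiM_I_finite) auto
    hence "emeasure (scale_measure (ennreal (c ^ card I))
           (distr (PiM I (\<lambda>_. lborel)) (PiM I (\<lambda>_. lborel)) (\<lambda>x. restrict (\<lambda>i. c * x i) I))) (PiE I A)
         = ennreal (c ^ card I) * emeasure (PiM I (\<lambda>_. lborel)) (Pi\<^sub>E I (\<lambda>i. {x. c * x \<in> A i}))"
      using meas by (simp add: emeasure_distr pre)
    also have "\<dots> = ennreal (c ^ card I) * (\<Prod>i\<in>I. emeasure lborel {x. c * x \<in> A i})"
    proof -
      have "\<And>i. i \<in> I \<Longrightarrow> {x. c * x \<in> A i} \<in> sets lborel"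
      proof -
        fix i assume "i \<in> I"
        hence "A i \<in> sets borel" using A by simp
        hence "((*) c) -` A i \<inter> space borel \<in> sets borel"
          by (intro measurable_sets[of _ borel]) auto
        thus "{x. c * x \<in> A i} \<in> sets lborel" by (simp add: vimage_def)
      qed
      thus ?thesis using I by (simp add: emeasure_PiM)
    qed
    also have "\<dots> = ennreal (c ^ card I) * (\<Prod>i\<in>I. ennreal (1/c) * emeasure lborel (A i))"
      using A c by (simp add: lborel_preimage_mult)
    also have "\<dots> = ennreal (c ^ card I) * (ennreal (1/c) ^ card I * (\<Prod>i\<in>I. emeasure lborel (A i)))"
      by (simp add: prod.distrib)
    also have "\<dots> = (ennreal (c ^ card I) * ennreal ((1/c) ^ card I)) * (\<Prod>i\<in>I. emeasure lborel (A i))"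
      using c by (simp add: ennreal_power mult.assoc)
    also have "\<dots> = (\<Prod>i\<in>I. emeasure lborel (A i))"
      using c by (simp add: ennreal_mult'[symmetric] power_mult_distrib[symmetric] del: ennreal_mult')
    finally show "emeasure (scale_measure (ennreal (c ^ card I))
           (distr (PiM I (\<lambda>_. lborel)) (PiM I (\<lambda>_. lborel)) (\<lambda>x. restrict (\<lambda>i. c * x i) I))) (PiE I A)
         = (\<Prod>i\<in>I. emeasure lborel (A i))" .
  qed
qed

lemma nn_integral_scale:
  fixes c :: real assumes c: "c > 0" and f[measurable]: "f \<in> borel_measurable (Leb d)"
  shows "(\<integral>\<^sup>+x. f x \<partial>Leb d) = ennreal (c ^ d) * (\<integral>\<^sup>+x. f (restrict (\<lambda>i. c * x i) {..<d}) \<partial>Leb d)"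
proof -
  have meas: "(\<lambda>x. restrict (\<lambda>i. c * x i) {..<d}) \<in> Leb d \<rightarrow>\<^sub>M Leb d"
    unfolding Leb_def by measurable
  have "(\<integral>\<^sup>+x. f x \<partial>Leb d) = (\<integral>\<^sup>+x. f x \<partial>scale_measure (ennreal (c ^ d))
           (distr (Leb d) (Leb d) (\<lambda>x. restrict (\<lambda>i. c * x i) {..<d})))"
    using PiM_scale[OF c, of "{..<d}"] unfolding Leb_def by simp
  also have "\<dots> = ennreal (c ^ d) * (\<integral>\<^sup>+x. f (restrict (\<lambda>i. c * x i) {..<d}) \<partial>Leb d)"
    using meas by (simp add: nn_integral_scale_measure nn_integral_distr)
  finally show ?thesis .
qed

lemma space_Leb: "space (Leb d) = PiE {..<d} (\<lambda>_. UNIV)"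
  by (simp add: Leb_def space_PiM)

lemma generic_ratio:
  fixes S :: "(nat \<Rightarrow> real) set" and d :: nat and J R :: real
  assumes d: "d > 0" and S[measurable]: "S \<in> sets (Leb d)" and Sfin: "emeasure (Leb d) S < \<infinity>"
    and Spos: "measure (Leb d) S > 0"
    and J: "\<And>\<theta>. (\<Sum>i<d. (\<theta> i)\<^sup>2) = 1 \<Longrightarrow>
            (\<integral>\<^sup>+x. ennreal (indicator S x * (\<Sum>i<d. x i * \<theta> i)\<^sup>2) \<partial>Leb d) = ennreal J"
    and Jpos: "J > 0"
    and R: "\<And>x. x \<in> S \<Longrightarrow> (\<Sum>i<d. (x i)\<^sup>2) \<le> R\<^sup>2" and R0: "R \<ge> 0" and ne: "S \<noteq> {}"
  shows "rad d ((\<lambda>x. restrict (\<lambda>i. x i / measure (Leb d) S powr (1 / real d)) {..<d}) ` S) /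
           (sqrt (real d) * isotropic_constant d
              ((\<lambda>x. restrict (\<lambda>i. x i / measure (Leb d) S powr (1 / real d)) {..<d}) ` S))
         \<le> R * sqrt (measure (Leb d) S / (real d * J))"
proof -
  define V where "V = measure (Leb d) S"
  define c where "c = V powr (1 / real d)"
  define D where "D = (\<lambda>x. restrict (\<lambda>i. x i / c) {..<d}) ` S"
  have Vpos: "V > 0" using Spos by (simp add: V_def)
  have cpos: "c > 0" using Vpos by (simp add: c_def)
  have cd: "c ^ d = V"
    using Vpos d by (simp add: c_def powr_realpow[symmetric] powr_powr)
  have Ssub: "S \<subseteq> space (Leb d)" using S sets.sets_into_space by blast
  have D_eq: "D = {y \<in> space (Leb d). restrict (\<lambda>i. c * y i) {..<d} \<in> S}"
  proof (intro set_eqI iffI)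
    fix y assume "y \<in> D"
    then obtain x where x: "x \<in> S" "y = restrict (\<lambda>i. x i / c) {..<d}" unfolding D_def by auto
    have xs: "x \<in> PiE {..<d} (\<lambda>_. UNIV)" using x Ssub by (auto simp: space_Leb)
    have "restrict (\<lambda>i. c * y i) {..<d} = x"
      using xs cpos by (auto simp: x(2) PiE_def extensional_def fun_eq_iff)
    thus "y \<in> {y \<in> space (Leb d). restrict (\<lambda>i. c * y i) {..<d} \<in> S}"
      using x by (auto simp: space_Leb)
  next
    fix y assume y: "y \<in> {y \<in> space (Leb d). restrict (\<lambda>i. c * y i) {..<d} \<in> S}"
    hence "y = restrict (\<lambda>i. restrict (\<lambda>i. c * y i) {..<d} i / c) {..<d}"
      using cpos by (auto simp: space_Leb PiE_def extensional_def fun_eq_iff)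
    thus "y \<in> D" using y unfolding D_def by blast
  qed
  have scm[measurable]: "(\<lambda>y. restrict (\<lambda>i. c * y i) {..<d}) \<in> Leb d \<rightarrow>\<^sub>M Leb d"
    unfolding Leb_def by measurable
  have Dm[measurable]: "D \<in> sets (Leb d)"
  proof -
    have "(\<lambda>y. restrict (\<lambda>i. c * y i) {..<d}) -` S \<inter> space (Leb d) \<in> sets (Leb d)"
      by (rule measurable_sets[OF scm S])
    moreover have "(\<lambda>y. restrict (\<lambda>i. c * y i) {..<d}) -` S \<inter> space (Leb d) = D"
      by (auto simp: D_eq)
    ultimately show ?thesis by simp
  qed
  have int: "(LINT y:D|Leb d. (\<Sum>i<d. y i * \<theta> i)\<^sup>2) = J / (V * c\<^sup>2)"
    if th: "(\<Sum>i<d. (\<theta> i)\<^sup>2) = 1" for \<theta>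
  proof -
    define F where "F x = ennreal (indicator S x * (1 / c\<^sup>2) * (\<Sum>i<d. x i * \<theta> i)\<^sup>2)" for x
    have Fm[measurable]: "F \<in> borel_measurable (Leb d)" unfolding F_def Leb_def
      using S unfolding Leb_def by measurable
    have "(\<integral>\<^sup>+y. ennreal (indicator D y * (\<Sum>i<d. y i * \<theta> i)\<^sup>2) \<partial>Leb d)
        = (\<integral>\<^sup>+y. F (restrict (\<lambda>i. c * y i) {..<d}) \<partial>Leb d)"
    proof (rule nn_integral_cong)
      fix y assume y: "y \<in> space (Leb d)"
      have "(\<Sum>i<d. restrict (\<lambda>i. c * y i) {..<d} i * \<theta> i) = c * (\<Sum>i<d. y i * \<theta> i)"
        by (simp add: sum_distrib_left mult.assoc)
      moreover have "indicator D y = (indicator S (restrict (\<lambda>i. c * y i) {..<d}) :: real)"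
        using y by (simp add: D_eq indicator_def)
      ultimately show "ennreal (indicator D y * (\<Sum>i<d. y i * \<theta> i)\<^sup>2) = F (restrict (\<lambda>i. c * y i) {..<d})"
        using cpos by (simp add: F_def power_mult_distrib field_simps)
    qed
    also have "\<dots> = (\<integral>\<^sup>+x. F x \<partial>Leb d) / ennreal (c ^ d)"
      using nn_integral_scale[OF cpos Fm] cpos
      by (simp add: mult.commute[of "ennreal (c ^ d)"] ennreal_mult_divide_eq)
    also have "(\<integral>\<^sup>+x. F x \<partial>Leb d) = ennreal (1 / c\<^sup>2) * ennreal J"
    proof -
      have "(\<integral>\<^sup>+x. F x \<partial>Leb d) = (\<integral>\<^sup>+x. ennreal (1 / c\<^sup>2) * ennreal (indicator S x * (\<Sum>i<d. x i * \<theta> i)\<^sup>2) \<partial>Leb d)"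
        unfolding F_def by (intro nn_integral_cong) (simp add: ennreal_mult'[symmetric] mult_ac)
      also have "\<dots> = ennreal (1 / c\<^sup>2) * ennreal J"
      proof -
        have m: "(\<lambda>x. ennreal (indicator S x * (\<Sum>i<d. x i * \<theta> i)\<^sup>2)) \<in> borel_measurable (Leb d)"
          using S unfolding Leb_def by measurable
        show ?thesis by (subst nn_integral_cmult[OF m]) (simp add: J[OF th])
      qed
      finally show ?thesis .
    qed
    finally have eq: "(\<integral>\<^sup>+y. ennreal (indicator D y * (\<Sum>i<d. y i * \<theta> i)\<^sup>2) \<partial>Leb d)
                   = ennreal (J / (V * c\<^sup>2))"
      using cpos Jpos cd Vpos
      by (simp add: ennreal_mult'[symmetric] divide_ennreal field_simps)
    have "(LINT y:D|Leb d. (\<Sum>i<d. y i * \<theta> i)\<^sup>2) = integral\<^sup>L (Leb d) (\<lambda>y. indicator D y * (\<Sum>i<d. y i * \<theta> i)\<^sup>2)"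
      by (simp add: set_lebesgue_integral_def)
    also have "\<dots> = enn2real (\<integral>\<^sup>+y. ennreal (indicator D y * (\<Sum>i<d. y i * \<theta> i)\<^sup>2) \<partial>Leb d)"
      by (rule integral_eq_nn_integral) (use Dm in \<open>auto simp: Leb_def\<close>)
    also have "\<dots> = J / (V * c\<^sup>2)" using eq cpos Jpos Vpos by simp
    finally show ?thesis .
  qed
  have L: "isotropic_constant d D = sqrt (J / (V * c\<^sup>2))"
    unfolding isotropic_constant_def
  proof (rule the_equality)
    show "0 < sqrt (J / (V * c\<^sup>2)) \<and> (\<forall>\<theta>. (\<Sum>i<d. (\<theta> i)\<^sup>2) = 1 \<longrightarrow>
        (LINT x:D|Leb d. (\<Sum>i<d. x i * \<theta> i)\<^sup>2) = (sqrt (J / (V * c\<^sup>2)))\<^sup>2)"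
      using int cpos Vpos Jpos by simp
  next
    fix L assume L: "0 < L \<and> (\<forall>\<theta>. (\<Sum>i<d. (\<theta> i)\<^sup>2) = 1 \<longrightarrow>
        (LINT x:D|Leb d. (\<Sum>i<d. x i * \<theta> i)\<^sup>2) = L\<^sup>2)"
    define e :: "nat \<Rightarrow> real" where "e = (\<lambda>i. if i = 0 then 1 else 0)"
    have "(\<Sum>i<d. (e i)\<^sup>2) = (\<Sum>i<d. if i = 0 then 1 else 0)"
      by (intro sum.cong) (auto simp: e_def)
    also have "\<dots> = 1" using d by (simp add: sum.delta)
    finally have "(\<Sum>i<d. (e i)\<^sup>2) = 1" .
    hence "L\<^sup>2 = J / (V * c\<^sup>2)" using L int[of e] by simp
    thus "L = sqrt (J / (V * c\<^sup>2))" using L by (metis less_le real_sqrt_unique)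
  qed
  have rad: "rad d D \<le> R / c"
    unfolding rad_def
  proof (rule cSup_least)
    show "(\<lambda>y. sqrt (\<Sum>i<d. (y i)\<^sup>2)) ` D \<noteq> {}" using ne by (simp add: D_def)
  next
    fix r assume "r \<in> (\<lambda>y. sqrt (\<Sum>i<d. (y i)\<^sup>2)) ` D"
    then obtain x where x: "x \<in> S" "r = sqrt (\<Sum>i<d. (x i / c)\<^sup>2)" by (auto simp: D_def)
    have "(\<Sum>i<d. (x i / c)\<^sup>2) = (\<Sum>i<d. (x i)\<^sup>2) / c\<^sup>2"
      by (simp add: power_divide sum_divide_distrib)
    also have "\<dots> \<le> R\<^sup>2 / c\<^sup>2" using R[OF x(1)] cpos by (simp add: divide_right_mono)
    also have "\<dots> = (R / c)\<^sup>2" by (simp add: power_divide)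
    finally have "sqrt (\<Sum>i<d. (x i / c)\<^sup>2) \<le> sqrt ((R / c)\<^sup>2)" by (rule real_sqrt_le_mono)
    thus "r \<le> R / c" using x(2) R0 cpos by simp
  qed
  have "rad d D / (sqrt (real d) * isotropic_constant d D) \<le> (R / c) / (sqrt (real d) * sqrt (J / (V * c\<^sup>2)))"
    unfolding L using rad d cpos Vpos Jpos by (intro divide_right_mono) auto
  also have "\<dots> = R * sqrt (V / (real d * J))"
    using cpos Vpos Jpos d by (simp add: real_sqrt_divide real_sqrt_mult field_simps)
  finally show ?thesis unfolding D_def c_def V_def .
qed

lemma prod_weight_quadratic:
  fixes w :: "real \<Rightarrow> real" and \<theta> :: "nat \<Rightarrow> real" and d :: nat
  assumes d: "d > 0"
    and w[measurable]: "w \<in> borel_measurable borel"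
    and i0: "integrable lborel w" and i1: "integrable lborel (\<lambda>t. w t * t)"
    and i2: "integrable lborel (\<lambda>t. w t * t\<^sup>2)"
    and odd: "(LINT t|lborel. w t * t) = 0"
  shows "integrable (Leb d) (\<lambda>x. (\<Prod>k<d. w (x k)) * (\<Sum>i<d. x i * \<theta> i)\<^sup>2)"
    and "(\<integral>x. (\<Prod>k<d. w (x k)) * (\<Sum>i<d. x i * \<theta> i)\<^sup>2 \<partial>Leb d)
       = (\<Sum>i<d. (\<theta> i)\<^sup>2) * (LINT t|lborel. w t * t\<^sup>2) * (LINT t|lborel. w t) ^ (d - 1)"
proof -
  interpret product_sigma_finite "\<lambda>_. lborel" by standard
  define f where "f i j k t = w t * (if k = i then t else 1) * (if k = j then t else 1)" for i j k :: nat and t :: real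
  define m0 where "m0 = (LINT t|lborel. w t)"
  define m1 where "m1 = (LINT t|lborel. w t * t)"
  define m2 where "m2 = (LINT t|lborel. w t * t\<^sup>2)"
  have fint: "integrable lborel (f i j k)" for i j k
  proof -
    have "f i j k = (if k = i \<and> k = j then (\<lambda>t. w t * t\<^sup>2) else if k = i \<or> k = j then (\<lambda>t. w t * t) else w)"
      by (auto simp: f_def fun_eq_iff power2_eq_square)
    thus ?thesis using i0 i1 i2 by simp
  qed
  have fval: "(LINT t|lborel. f i j k t) = (if k = i \<and> k = j then m2 else if k = i \<or> k = j then m1 else m0)" for i j k
  proof -
    have "f i j k = (if k = i \<and> k = j then (\<lambda>t. w t * t\<^sup>2) else if k = i \<or> k = j then (\<lambda>t. w t * t) else w)"
      by (auto simp: f_def fun_eq_iff power2_eq_square)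
    thus ?thesis by (simp add: m0_def m1_def m2_def)
  qed
  have split: "(\<Prod>k<d. w (x k)) * (\<Sum>i<d. x i * \<theta> i)\<^sup>2
      = (\<Sum>i<d. \<Sum>j<d. (\<theta> i * \<theta> j) * (\<Prod>k<d. f i j k (x k)))" for x :: "nat \<Rightarrow> real"
  proof -
    have pf: "(\<Prod>k<d. f i j k (x k)) = (\<Prod>k<d. w (x k)) * (x i * x j)" if "i < d" "j < d" for i j
    proof -
      have "(\<Prod>k<d. f i j k (x k)) = (\<Prod>k<d. w (x k)) * (\<Prod>k<d. (if k = i then x k else 1)) * (\<Prod>k<d. (if k = j then x k else 1))"
        by (simp add: f_def prod.distrib)
      also have "(\<Prod>k<d. (if k = i then x k else 1)) = x i" using that by (simp add: prod.delta)
      also have "(\<Prod>k<d. (if k = j then x k else 1)) = x j" using that by (simp add: prod.delta)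
      finally show ?thesis by simp
    qed
    have "(\<Sum>i<d. x i * \<theta> i)\<^sup>2 = (\<Sum>i<d. \<Sum>j<d. (x i * \<theta> i) * (x j * \<theta> j))"
      by (simp add: power2_eq_square sum_product)
    hence "(\<Prod>k<d. w (x k)) * (\<Sum>i<d. x i * \<theta> i)\<^sup>2
        = (\<Sum>i<d. \<Sum>j<d. (\<Prod>k<d. w (x k)) * ((x i * \<theta> i) * (x j * \<theta> j)))"
      by (simp add: sum_distrib_left)
    also have "\<dots> = (\<Sum>i<d. \<Sum>j<d. (\<theta> i * \<theta> j) * (\<Prod>k<d. f i j k (x k)))"
      by (intro sum.cong refl) (simp add: pf mult_ac)
    finally show ?thesis .
  qed
  have pint: "integrable (Leb d) (\<lambda>x. \<Prod>k<d. f i j k (x k))" for i j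
    unfolding Leb_def by (rule product_integrable_prod) (auto intro: fint)
  have pval: "(\<integral>x. (\<Prod>k<d. f i j k (x k)) \<partial>Leb d) = (\<Prod>k<d. LINT t|lborel. f i j k t)" for i j
    unfolding Leb_def by (rule product_integral_prod) (auto intro: fint)
  have m1z: "m1 = 0" using odd by (simp add: m1_def)
  have pij: "(\<Prod>k<d. LINT t|lborel. f i j k t) = (if i = j then m2 * m0 ^ (d - 1) else 0)"
    if "i < d" "j < d" for i j
  proof (cases "i = j")
    case True
    have "(\<Prod>k<d. LINT t|lborel. f i j k t) = (LINT t|lborel. f i j i t) * (\<Prod>k\<in>{..<d} - {i}. LINT t|lborel. f i j k t)"
      using that by (simp add: prod.remove)
    also have "(\<Prod>k\<in>{..<d} - {i}. LINT t|lborel. f i j k t) = (\<Prod>k\<in>{..<d} - {i}. m0)"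
      using True by (intro prod.cong) (auto simp: fval)
    also have "\<dots> = m0 ^ (d - 1)" using that by simp
    finally show ?thesis using True by (simp add: fval)
  next
    case False
    have "(LINT t|lborel. f i j i t) = 0" using False by (simp add: fval m1z)
    hence "(\<Prod>k<d. LINT t|lborel. f i j k t) = 0" using that by (intro prod_zero) auto
    thus ?thesis using False by simp
  qed
  show "integrable (Leb d) (\<lambda>x. (\<Prod>k<d. w (x k)) * (\<Sum>i<d. x i * \<theta> i)\<^sup>2)"
  proof -
    have a: "integrable (Leb d) (\<lambda>x. (\<theta> i * \<theta> j) * (\<Prod>k<d. f i j k (x k)))" for i j
      using pint[of i j] by (rule integrable_mult_right)
    have b: "integrable (Leb d) (\<lambda>x. \<Sum>j<d. (\<theta> i * \<theta> j) * (\<Prod>k<d. f i j k (x k)))" for i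
      by (rule Bochner_Integration.integrable_sum) (rule a)
    show ?thesis unfolding split by (rule Bochner_Integration.integrable_sum) (rule b)
  qed
  have "(\<integral>x. (\<Prod>k<d. w (x k)) * (\<Sum>i<d. x i * \<theta> i)\<^sup>2 \<partial>Leb d)
      = (\<integral>x. (\<Sum>i<d. \<Sum>j<d. (\<theta> i * \<theta> j) * (\<Prod>k<d. f i j k (x k))) \<partial>Leb d)"
    by (simp add: split)
  also have "\<dots> = (\<Sum>i<d. \<Sum>j<d. (\<theta> i * \<theta> j) * (\<integral>x. (\<Prod>k<d. f i j k (x k)) \<partial>Leb d))"
    using pint by (simp add: integral_sum integrable_sum)
  also have "\<dots> = (\<Sum>i<d. \<Sum>j<d. (\<theta> i * \<theta> j) * (if i = j then m2 * m0 ^ (d - 1) else 0))"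
    by (intro sum.cong refl) (simp add: pval pij)
  also have "\<dots> = (\<Sum>i<d. (\<theta> i)\<^sup>2 * (m2 * m0 ^ (d - 1)))"
    by (intro sum.cong refl) (simp add: if_distrib sum.delta power2_eq_square cong: if_cong)
  also have "\<dots> = (\<Sum>i<d. (\<theta> i)\<^sup>2) * m2 * m0 ^ (d - 1)"
    by (simp add: sum_distrib_right mult.assoc)
  finally show "(\<integral>x. (\<Prod>k<d. w (x k)) * (\<Sum>i<d. x i * \<theta> i)\<^sup>2 \<partial>Leb d)
       = (\<Sum>i<d. (\<theta> i)\<^sup>2) * (LINT t|lborel. w t * t\<^sup>2) * (LINT t|lborel. w t) ^ (d - 1)"
    by (simp add: m0_def m2_def)
qed

lemma prod_weight_quadratic_nn:
  fixes w :: "real \<Rightarrow> real" and \<theta> :: "nat \<Rightarrow> real" and d :: nat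
  assumes d: "d > 0"
    and w[measurable]: "w \<in> borel_measurable borel" and wnn: "\<And>t. w t \<ge> 0"
    and i0: "integrable lborel w" and i1: "integrable lborel (\<lambda>t. w t * t)"
    and i2: "integrable lborel (\<lambda>t. w t * t\<^sup>2)"
    and odd: "(LINT t|lborel. w t * t) = 0"
  shows "(\<integral>\<^sup>+x. ennreal ((\<Prod>k<d. w (x k)) * (\<Sum>i<d. x i * \<theta> i)\<^sup>2) \<partial>Leb d)
       = ennreal ((\<Sum>i<d. (\<theta> i)\<^sup>2) * (LINT t|lborel. w t * t\<^sup>2) * (LINT t|lborel. w t) ^ (d - 1))"
  using prod_weight_quadratic[OF assms(1,2,4-7), of \<theta>]
  by (subst nn_integral_eq_integral) (auto intro!: mult_nonneg_nonneg prod_nonneg wnn)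

lemma Bp_inf: "Bp d \<infinity> = PiE {..<d} (\<lambda>_. {-1..1::real})"
proof -
  have "pnorm \<infinity> d x \<le> 1 \<longleftrightarrow> (\<forall>i<d. \<bar>x i\<bar> \<le> 1)" for x
    by (auto simp: pnorm_def)
  thus ?thesis
    by (auto simp: Bp_def space_Leb PiE_def Pi_def abs_le_iff)
qed

lemma cube_ints:
  "integrable lborel (\<lambda>t::real. indicator {-1..1} t :: real)"
  "integrable lborel (\<lambda>t::real. indicator {-1..1} t * t)"
  "integrable lborel (\<lambda>t::real. indicator {-1..1} t * t\<^sup>2)"
  "(LINT t|lborel. indicator {-1..1} t * (t::real)) = 0"
  "(LINT t|lborel. indicator {-1..1} t * (t::real)\<^sup>2) = 2/3"
  "(LINT t|lborel. (indicator {-1..1::real} t :: real)) = 2"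
proof -
  have ii: "integrable lborel (\<lambda>x::real. x ^ k * indicator {-1..1} x)" for k
    by (intro borel_integrable_atLeastAtMost) auto
  show "integrable lborel (\<lambda>t::real. indicator {-1..1} t :: real)" using ii[of 0] by simp
  show "integrable lborel (\<lambda>t::real. indicator {-1..1} t * t)" using ii[of 1] by (simp add: mult.commute)
  show "integrable lborel (\<lambda>t::real. indicator {-1..1} t * t\<^sup>2)" using ii[of 2] by (simp add: mult.commute)
  show "(LINT t|lborel. indicator {-1..1} t * (t::real)) = 0"
    using integral_power[of "-1" 1 1] by (simp add: mult.commute)
  show "(LINT t|lborel. indicator {-1..1} t * (t::real)\<^sup>2) = 2/3"
    using integral_power[of "-1" 1 2] by (simp add: mult.commute)
  show "(LINT t|lborel. (indicator {-1..1::real} t :: real)) = 2"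
    by simp
qed

lemma cube_case:
  assumes d: "d > 0"
  shows "rad d (Dp d \<infinity>) / (sqrt (real d) * isotropic_constant d (Dp d \<infinity>)) \<le> sqrt 3"
proof -
  interpret product_sigma_finite "\<lambda>_. lborel" by standard
  define Q where "Q = PiE {..<d} (\<lambda>_. {-1..1::real})"
  have Qm: "Q \<in> sets (Leb d)" unfolding Q_def Leb_def by (intro sets_PiM_I_finite) auto
  have Qe: "emeasure (Leb d) Q = ennreal (2 ^ d)"
  proof -
    have "(2::ennreal) ^ d = ennreal (2 ^ d)" by (metis ennreal_numeral ennreal_power zero_le_numeral)
    thus ?thesis unfolding Q_def Leb_def by (simp add: emeasure_PiM)
  qed
  hence Qmeas: "measure (Leb d) Q = 2 ^ d" by (simp add: measure_def)
  have J: "(\<integral>\<^sup>+x. ennreal (indicator Q x * (\<Sum>i<d. x i * \<theta> i)\<^sup>2) \<partial>Leb d) = ennreal (2/3 * 2 ^ (d - 1))"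
    if th: "(\<Sum>i<d. (\<theta> i)\<^sup>2) = 1" for \<theta>
  proof -
    have "(\<integral>\<^sup>+x. ennreal (indicator Q x * (\<Sum>i<d. x i * \<theta> i)\<^sup>2) \<partial>Leb d)
        = (\<integral>\<^sup>+x. ennreal ((\<Prod>k<d. indicator {-1..1} (x k)) * (\<Sum>i<d. x i * \<theta> i)\<^sup>2) \<partial>Leb d)"
    proof (rule nn_integral_cong)
      fix x assume x: "x \<in> space (Leb d)"
      have "indicator Q x = (\<Prod>k<d. indicator {-1..1::real} (x k) :: real)"
      proof (cases "\<forall>k<d. x k \<in> {-1..1}")
        case True
        thus ?thesis using x by (auto simp: Q_def space_Leb indicator_def PiE_def)
      next
        case False
        then obtain k where "k < d" "x k \<notin> {-1..1}" by blast
        thus ?thesis using x by (auto simp: Q_def space_Leb PiE_def indicator_def intro!: prod_zero)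
      qed
      thus "ennreal (indicator Q x * (\<Sum>i<d. x i * \<theta> i)\<^sup>2)
          = ennreal ((\<Prod>k<d. indicator {-1..1} (x k)) * (\<Sum>i<d. x i * \<theta> i)\<^sup>2)" by simp
    qed
    also have "\<dots> = ennreal ((\<Sum>i<d. (\<theta> i)\<^sup>2) * (LINT t|lborel. indicator {-1..1} t * t\<^sup>2)
                        * (LINT t|lborel. (indicator {-1..1::real} t :: real)) ^ (d - 1))"
      by (rule prod_weight_quadratic_nn[OF d]) (auto simp: cube_ints)
    also have "\<dots> = ennreal (2/3 * 2 ^ (d - 1))" by (simp add: th cube_ints)
    finally show ?thesis .
  qed
  have R: "(\<Sum>i<d. (x i)\<^sup>2) \<le> (sqrt (real d))\<^sup>2" if "x \<in> Q" for x
  proof -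
    have "(\<Sum>i<d. (x i)\<^sup>2) \<le> (\<Sum>i<d. 1)"
    proof (rule sum_mono)
      fix i assume "i \<in> {..<d}"
      hence "\<bar>x i\<bar> \<le> 1" using that by (auto simp: Q_def PiE_def Pi_def)
      thus "(x i)\<^sup>2 \<le> 1" by (simp add: abs_le_square_iff[symmetric] power2_eq_square abs_le_iff) (smt (verit) mult_le_one mult_minus_left mult_minus_right)
    qed
    thus ?thesis by simp
  qed
  have ne: "Q \<noteq> {}" unfolding Q_def by (auto simp: PiE_eq_empty_iff)
  have "rad d (Dp d \<infinity>) / (sqrt (real d) * isotropic_constant d (Dp d \<infinity>))
      \<le> sqrt (real d) * sqrt (measure (Leb d) Q / (real d * (2/3 * 2 ^ (d - 1))))"
    unfolding Dp_def Bp_inf Q_def[symmetric]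
    by (rule generic_ratio[OF d Qm]) (use Qe Qmeas J R ne in auto)
  also have "measure (Leb d) Q / (real d * (2/3 * 2 ^ (d - 1))) = 3 / real d"
  proof -
    have "(2::real) ^ d = 2 * 2 ^ (d - 1)" using d by (cases d) auto
    thus ?thesis using d by (simp add: Qmeas field_simps)
  qed
  also have "sqrt (real d) * sqrt (3 / real d) = sqrt 3"
    using d by (simp add: real_sqrt_mult[symmetric] field_simps)
  finally show ?thesis .
qed

definition Nr :: "real \<Rightarrow> nat \<Rightarrow> (nat \<Rightarrow> real) \<Rightarrow> real" where
  "Nr r d x = (\<Sum>i<d. \<bar>x i\<bar> powr r)"

lemma Nr_nonneg: "Nr r d x \<ge> 0" by (simp add: Nr_def sum_nonneg)

lemma Nr_measurable[measurable]: "Nr r d \<in> borel_measurable (Leb d)"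
  unfolding Nr_def Leb_def by measurable

lemma Nr_scale:
  assumes "l > 0"
  shows "Nr r d (restrict (\<lambda>i. l * x i) {..<d}) = l powr r * Nr r d x"
  using assms by (simp add: Nr_def abs_mult powr_mult sum_distrib_left)

lemma exp_tail:
  fixes a :: real
  shows "(\<integral>\<^sup>+s. ennreal (indicator {a..} s * exp (- s)) \<partial>lborel) = ennreal (exp (- a))"
proof -
  have "ennreal 1 = ennreal (Gamma 1)" by simp
  also have "\<dots> = (\<integral>\<^sup>+t. ennreal (indicator {0..} t * t powr (1 - 1) / exp t) \<partial>lborel)"
    by (rule Gamma_conv_nn_integral_real) simp
  also have "\<dots> = (\<integral>\<^sup>+t. ennreal (indicator {0..} t * exp (- t)) \<partial>lborel)"
  proof (rule nn_integral_cong_AE)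
    show "AE t in lborel. ennreal (indicator {0..} t * t powr (1 - 1) / exp t) = ennreal (indicator {0..} t * exp (- t))"
      using AE_lborel_singleton[of 0] by eventually_elim (simp add: exp_minus field_simps)
  qed
  finally have one: "(\<integral>\<^sup>+t. ennreal (indicator {0..} t * exp (- t)) \<partial>lborel) = 1" by simp
  have "(\<integral>\<^sup>+s. ennreal (indicator {a..} s * exp (- s)) \<partial>lborel)
      = ennreal \<bar>1\<bar> * (\<integral>\<^sup>+x. ennreal (indicator {a..} (a + 1 * x) * exp (- (a + 1 * x))) \<partial>lborel)"
    by (rule nn_integral_real_affine) auto
  also have "\<dots> = (\<integral>\<^sup>+x. ennreal (exp (- a)) * ennreal (indicator {0..} x * exp (- x)) \<partial>lborel)"
  proof -
    have "\<And>x. ennreal (indicator {a..} (a + 1 * x) * exp (- (a + 1 * x))) = ennreal (exp (- a)) * ennreal (indicator {0..} x * exp (- x))"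
    proof -
      fix x :: real
      have "exp (- (a + 1 * x)) = exp (- a) * exp (- x)" by (simp add: exp_add[symmetric])
      thus "ennreal (indicator {a..} (a + 1 * x) * exp (- (a + 1 * x))) = ennreal (exp (- a)) * ennreal (indicator {0..} x * exp (- x))"
        by (simp add: ennreal_mult'[symmetric] indicator_def)
    qed
    thus ?thesis by simp
  qed
  also have "\<dots> = ennreal (exp (- a))"
    by (subst nn_integral_cmult) (auto simp: one)
  finally show ?thesis .
qed

lemma sublevel_scale:
  fixes r k s :: real and g :: "(nat \<Rightarrow> real) \<Rightarrow> real"
  assumes r: "r > 0" and s: "s > 0"
    and g[measurable]: "g \<in> borel_measurable (Leb d)"
    and hom: "\<And>l x. l > 0 \<Longrightarrow> g (restrict (\<lambda>i. l * x i) {..<d}) = l powr k * g x"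
  shows "(\<integral>\<^sup>+x. ennreal (if Nr r d x \<le> s then g x else 0) \<partial>Leb d)
       = ennreal (s powr ((real d + k) / r)) * (\<integral>\<^sup>+x. ennreal (if Nr r d x \<le> 1 then g x else 0) \<partial>Leb d)"
proof -
  define l where "l = s powr (1 / r)"
  have lpos: "l > 0" using s by (simp add: l_def)
  have lr: "l powr r = s" using s r by (simp add: l_def powr_powr)
  have Fm: "(\<lambda>x. ennreal (if Nr r d x \<le> s then g x else 0)) \<in> borel_measurable (Leb d)"
    by measurable
  have "(\<integral>\<^sup>+x. ennreal (if Nr r d x \<le> s then g x else 0) \<partial>Leb d)
      = ennreal (l ^ d) * (\<integral>\<^sup>+x. ennreal (if Nr r d (restrict (\<lambda>i. l * x i) {..<d}) \<le> s
                then g (restrict (\<lambda>i. l * x i) {..<d}) else 0) \<partial>Leb d)"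
    by (rule nn_integral_scale[OF lpos Fm])
  also have "(\<integral>\<^sup>+x. ennreal (if Nr r d (restrict (\<lambda>i. l * x i) {..<d}) \<le> s
                then g (restrict (\<lambda>i. l * x i) {..<d}) else 0) \<partial>Leb d)
      = (\<integral>\<^sup>+x. ennreal (l powr k) * ennreal (if Nr r d x \<le> 1 then g x else 0) \<partial>Leb d)"
  proof (rule nn_integral_cong)
    fix x
    have "Nr r d (restrict (\<lambda>i. l * x i) {..<d}) \<le> s \<longleftrightarrow> Nr r d x \<le> 1"
      using s by (simp add: Nr_scale[OF lpos] lr)
    thus "ennreal (if Nr r d (restrict (\<lambda>i. l * x i) {..<d}) \<le> s
                then g (restrict (\<lambda>i. l * x i) {..<d}) else 0)
        = ennreal (l powr k) * ennreal (if Nr r d x \<le> 1 then g x else 0)"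
      using lpos by (simp add: hom ennreal_mult'[symmetric] ennreal_mult[symmetric])
  qed
  also have "\<dots> = ennreal (l powr k) * (\<integral>\<^sup>+x. ennreal (if Nr r d x \<le> 1 then g x else 0) \<partial>Leb d)"
    by (rule nn_integral_cmult) measurable
  also have "ennreal (l ^ d) * (ennreal (l powr k) * (\<integral>\<^sup>+x. ennreal (if Nr r d x \<le> 1 then g x else 0) \<partial>Leb d))
      = ennreal (l ^ d * l powr k) * (\<integral>\<^sup>+x. ennreal (if Nr r d x \<le> 1 then g x else 0) \<partial>Leb d)"
    using lpos by (simp add: ennreal_mult mult.assoc)
  also have "l ^ d * l powr k = s powr ((real d + k) / r)"
    using lpos s r by (simp add: l_def powr_realpow[symmetric] powr_add[symmetric] powr_powr add_divide_distrib)
  finally show ?thesis .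
qed

lemma layer_cake:
  fixes r k :: real and g :: "(nat \<Rightarrow> real) \<Rightarrow> real"
  assumes r: "r > 0" and k: "k \<ge> 0"
    and g[measurable]: "g \<in> borel_measurable (Leb d)" and gnn: "\<And>x. g x \<ge> 0"
    and hom: "\<And>l x. l > 0 \<Longrightarrow> g (restrict (\<lambda>i. l * x i) {..<d}) = l powr k * g x"
  shows "(\<integral>\<^sup>+x. ennreal (exp (- Nr r d x) * g x) \<partial>Leb d)
       = ennreal (Gamma ((real d + k) / r + 1)) * (\<integral>\<^sup>+x. ennreal (if Nr r d x \<le> 1 then g x else 0) \<partial>Leb d)"
proof -
  interpret product_sigma_finite "\<lambda>_. lborel" by standard
  interpret L: finite_product_sigma_finite "\<lambda>_. lborel" "{..<d}" by standard simp
  interpret P: pair_sigma_finite "Leb d" lborel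
    unfolding Leb_def by (intro pair_sigma_finite.intro) (auto intro: L.sigma_finite_measure_axioms lborel.sigma_finite_measure_axioms)
  define K where "K = (\<integral>\<^sup>+x. ennreal (if Nr r d x \<le> 1 then g x else 0) \<partial>Leb d)"
  define c where "c = (real d + k) / r"
  have "(\<integral>\<^sup>+x. ennreal (exp (- Nr r d x) * g x) \<partial>Leb d)
      = (\<integral>\<^sup>+x. \<integral>\<^sup>+s. ennreal (if Nr r d x \<le> s then exp (- s) * g x else 0) \<partial>lborel \<partial>Leb d)"
  proof (rule nn_integral_cong)
    fix x
    have "(\<integral>\<^sup>+s. ennreal (if Nr r d x \<le> s then exp (- s) * g x else 0) \<partial>lborel)
        = (\<integral>\<^sup>+s. ennreal (indicator {Nr r d x..} s * exp (- s)) * ennreal (g x) \<partial>lborel)"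
      using gnn by (intro nn_integral_cong) (simp add: ennreal_mult'[symmetric] indicator_def)
    also have "\<dots> = ennreal (exp (- Nr r d x)) * ennreal (g x)"
      by (subst nn_integral_multc) (auto simp: exp_tail)
    finally show "ennreal (exp (- Nr r d x) * g x)
        = (\<integral>\<^sup>+s. ennreal (if Nr r d x \<le> s then exp (- s) * g x else 0) \<partial>lborel)"
      by (simp add: ennreal_mult')
  qed
  also have "\<dots> = (\<integral>\<^sup>+s. \<integral>\<^sup>+x. ennreal (if Nr r d x \<le> s then exp (- s) * g x else 0) \<partial>Leb d \<partial>lborel)"
  proof (rule P.Fubini'[symmetric])
    show "case_prod (\<lambda>x s. ennreal (if Nr r d x \<le> s then exp (- s) * g x else 0)) \<in> borel_measurable (Leb d \<Otimes>\<^sub>M lborel)"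
      by measurable
  qed
  also have "\<dots> = (\<integral>\<^sup>+s. ennreal (indicator {0..} s * s powr (c + 1 - 1) / exp s) * K \<partial>lborel)"
  proof (rule nn_integral_cong_AE)
    show "AE s in lborel. (\<integral>\<^sup>+x. ennreal (if Nr r d x \<le> s then exp (- s) * g x else 0) \<partial>Leb d)
        = ennreal (indicator {0..} s * s powr (c + 1 - 1) / exp s) * K"
      using AE_lborel_singleton[of 0]
    proof eventually_elim
      case (elim s)
      show ?case
      proof (cases "s > 0")
        case True
        have "(\<integral>\<^sup>+x. ennreal (if Nr r d x \<le> s then exp (- s) * g x else 0) \<partial>Leb d)
            = (\<integral>\<^sup>+x. ennreal (exp (- s)) * ennreal (if Nr r d x \<le> s then g x else 0) \<partial>Leb d)"
          by (intro nn_integral_cong) (simp add: ennreal_mult'[symmetric])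
        also have "\<dots> = ennreal (exp (- s)) * (\<integral>\<^sup>+x. ennreal (if Nr r d x \<le> s then g x else 0) \<partial>Leb d)"
          by (rule nn_integral_cmult) measurable
        also have "\<dots> = ennreal (exp (- s)) * (ennreal (s powr c) * K)"
          unfolding K_def c_def by (subst sublevel_scale[OF r True g hom]) auto
        also have "\<dots> = ennreal (indicator {0..} s * s powr (c + 1 - 1) / exp s) * K"
          using True by (simp add: ennreal_mult'[symmetric] mult.assoc exp_minus field_simps)
        finally show ?thesis .
      next
        case False
        hence "s < 0" using elim by simp
        hence "\<And>x. \<not> Nr r d x \<le> s" using Nr_nonneg by (metis leD le_less_trans)
        thus ?thesis using \<open>s < 0\<close> by simp
      qed
    qed
  qed
  also have "\<dots> = (\<integral>\<^sup>+s. ennreal (indicator {0..} s * s powr (c + 1 - 1) / exp s) \<partial>lborel) * K"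
    by (rule nn_integral_multc) measurable
  also have "(\<integral>\<^sup>+s. ennreal (indicator {0..} s * s powr (c + 1 - 1) / exp s) \<partial>lborel) = ennreal (Gamma (c + 1))"
  proof -
    have "c \<ge> 0" using r k by (simp add: c_def)
    thus ?thesis by (subst Gamma_conv_nn_integral_real[of "c + 1"]) auto
  qed
  finally show ?thesis by (simp add: K_def c_def mult.commute)
qed

lemma Leb1:
  assumes [measurable]: "f \<in> borel_measurable lborel"
  shows "(\<integral>\<^sup>+x. f (x 0) \<partial>Leb 1) = (\<integral>\<^sup>+t. f t \<partial>lborel)"
proof -
  interpret product_sigma_finite "\<lambda>_. lborel" by standard
  have "{..<1::nat} = {0}" by auto
  hence "Leb 1 = PiM {0} (\<lambda>_. lborel)" by (simp add: Leb_def)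
  thus ?thesis by (simp add: product_nn_integral_singleton)
qed

lemma abs_powr_le1:
  fixes r t :: real assumes r: "r > 0"
  shows "\<bar>t\<bar> powr r \<le> 1 \<longleftrightarrow> \<bar>t\<bar> \<le> 1"
proof
  assume "\<bar>t\<bar> \<le> 1"
  thus "\<bar>t\<bar> powr r \<le> 1" using r by (simp add: powr_le1)
next
  assume h: "\<bar>t\<bar> powr r \<le> 1"
  show "\<bar>t\<bar> \<le> 1"
  proof (rule ccontr)
    assume "\<not> \<bar>t\<bar> \<le> 1"
    hence "1 < \<bar>t\<bar>" by simp
    hence "1 powr r < \<bar>t\<bar> powr r" using r by (intro powr_less_mono2) auto
    hence "1 < \<bar>t\<bar> powr r" by simp
    thus False using h by simp
  qed
qed

lemma onedim_moment:
  fixes r :: real and m :: nat assumes r: "r > 0"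
  shows "(\<integral>\<^sup>+t. ennreal (exp (- (\<bar>t\<bar> powr r)) * \<bar>t\<bar> ^ m) \<partial>lborel)
       = ennreal (Gamma ((1 + real m) / r + 1)) * (\<integral>\<^sup>+t. ennreal (indicator {-1..1} t * \<bar>t\<bar> ^ m) \<partial>lborel)"
proof -
  have N1: "Nr r 1 x = \<bar>x 0\<bar> powr r" for x by (simp add: Nr_def)
  have g: "(\<lambda>x::nat\<Rightarrow>real. \<bar>x 0\<bar> ^ m) \<in> borel_measurable (Leb 1)" unfolding Leb_def by measurable
  have lc: "(\<integral>\<^sup>+x. ennreal (exp (- Nr r 1 x) * \<bar>x 0\<bar> ^ m) \<partial>Leb 1)
       = ennreal (Gamma ((real 1 + real m) / r + 1)) * (\<integral>\<^sup>+x. ennreal (if Nr r 1 x \<le> 1 then \<bar>x 0\<bar> ^ m else 0) \<partial>Leb 1)"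
    by (rule layer_cake[OF r _ g]) (auto simp: abs_mult power_mult_distrib powr_realpow)
  have "(\<integral>\<^sup>+t. ennreal (exp (- (\<bar>t\<bar> powr r)) * \<bar>t\<bar> ^ m) \<partial>lborel)
      = (\<integral>\<^sup>+x. ennreal (exp (- Nr r 1 x) * \<bar>x 0\<bar> ^ m) \<partial>Leb 1)"
    unfolding N1 by (rule Leb1[symmetric]) measurable
  also have "\<dots> = ennreal (Gamma ((1 + real m) / r + 1)) * (\<integral>\<^sup>+x. ennreal (if \<bar>x 0\<bar> powr r \<le> 1 then \<bar>x 0\<bar> ^ m else 0) \<partial>Leb 1)"
    using lc unfolding Nr_def by simp
  also have "(\<integral>\<^sup>+x. ennreal (if \<bar>x 0\<bar> powr r \<le> 1 then \<bar>x 0\<bar> ^ m else 0) \<partial>Leb 1)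
      = (\<integral>\<^sup>+t. ennreal (if \<bar>t\<bar> powr r \<le> 1 then \<bar>t\<bar> ^ m else 0) \<partial>lborel)"
    by (rule Leb1) measurable
  also have "\<dots> = (\<integral>\<^sup>+t. ennreal (indicator {-1..1} t * \<bar>t\<bar> ^ m) \<partial>lborel)"
    by (intro nn_integral_cong) (auto simp: abs_powr_le1[OF r] indicator_def abs_le_iff)
  finally show ?thesis .
qed

lemma weight_facts:
  fixes r :: real assumes r: "r > 0"
  defines "w \<equiv> (\<lambda>t::real. exp (- (\<bar>t\<bar> powr r)))"
  shows "w \<in> borel_measurable borel" "\<And>t. w t \<ge> 0"
    "integrable lborel w" "integrable lborel (\<lambda>t. w t * t)" "integrable lborel (\<lambda>t. w t * t\<^sup>2)"
    "(LINT t|lborel. w t * t) = 0"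
    "(LINT t|lborel. w t) = 2 * Gamma (1 / r + 1)"
    "(LINT t|lborel. w t * t\<^sup>2) = 2 / 3 * Gamma (3 / r + 1)"
proof -
  show wm[measurable]: "w \<in> borel_measurable borel" unfolding w_def by measurable
  show wnn: "\<And>t. w t \<ge> 0" unfolding w_def by simp
  have n0: "(\<integral>\<^sup>+t. ennreal (w t) \<partial>lborel) = ennreal (2 * Gamma (1 / r + 1))"
  proof -
    have "(\<integral>\<^sup>+t. ennreal (w t) \<partial>lborel) = (\<integral>\<^sup>+t. ennreal (exp (- (\<bar>t\<bar> powr r)) * \<bar>t\<bar> ^ 0) \<partial>lborel)"
      by (simp add: w_def)
    also have "\<dots> = ennreal (Gamma ((1 + real 0) / r + 1)) * (\<integral>\<^sup>+t. ennreal (indicator {-1..1} t * \<bar>t\<bar> ^ 0) \<partial>lborel)"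
      by (rule onedim_moment[OF r])
    also have "(\<integral>\<^sup>+t. ennreal (indicator {-1..1} t * \<bar>t\<bar> ^ 0) \<partial>lborel) = 2"
      by (simp add: ennreal_indicator nn_integral_indicator)
    also have "ennreal (Gamma ((1 + real 0) / r + 1)) * 2 = ennreal (2 * Gamma (1 / r + 1))"
      using r by (simp add: ennreal_mult' mult.commute)
    finally show ?thesis .
  qed
  have n2: "(\<integral>\<^sup>+t. ennreal (w t * t\<^sup>2) \<partial>lborel) = ennreal (2 / 3 * Gamma (3 / r + 1))"
  proof -
    have "(\<integral>\<^sup>+t. ennreal (w t * t\<^sup>2) \<partial>lborel) = (\<integral>\<^sup>+t. ennreal (exp (- (\<bar>t\<bar> powr r)) * \<bar>t\<bar> ^ 2) \<partial>lborel)"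
      by (simp add: w_def)
    also have "\<dots> = ennreal (Gamma ((1 + real 2) / r + 1)) * (\<integral>\<^sup>+t. ennreal (indicator {-1..1} t * \<bar>t\<bar> ^ 2) \<partial>lborel)"
      by (rule onedim_moment[OF r])
    also have "(\<integral>\<^sup>+t. ennreal (indicator {-1..1} t * \<bar>t\<bar> ^ 2) \<partial>lborel) = ennreal (2 / 3)"
    proof -
      have ii: "integrable lborel (\<lambda>t::real. t ^ 2 * indicator {-1..1} t)"
        by (intro borel_integrable_atLeastAtMost) auto
      have "(\<integral>\<^sup>+t. ennreal (indicator {-1..1} t * \<bar>t\<bar> ^ 2) \<partial>lborel) = (\<integral>\<^sup>+t. ennreal (t ^ 2 * indicator {-1..1} t) \<partial>lborel)"
        by (simp add: mult.commute)
      also have "\<dots> = ennreal (LINT t|lborel. t ^ 2 * indicator {-1..1} t)"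
        by (rule nn_integral_eq_integral[OF ii]) auto
      also have "(LINT t|lborel. (t::real) ^ 2 * indicator {-1..1} t) = (2 / 3 :: real)"
        using integral_power[of "-1" 1 2] by simp
      finally show ?thesis .
    qed
    also have "ennreal (Gamma ((1 + real 2) / r + 1)) * ennreal (2 / 3) = ennreal (2 / 3 * Gamma (3 / r + 1))"
      using r by (simp add: ennreal_mult'[symmetric] mult.commute)
    finally show ?thesis .
  qed
  show i0: "integrable lborel w"
    by (rule integrableI_nonneg) (use wnn n0 in auto)
  show i2: "integrable lborel (\<lambda>t. w t * t\<^sup>2)"
    by (rule integrableI_nonneg) (use wnn n2 in auto)
  show "integrable lborel (\<lambda>t. w t * t)"
  proof (rule Bochner_Integration.integrable_bound[of _ "\<lambda>t. w t + w t * t\<^sup>2"])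
    show "integrable lborel (\<lambda>t. w t + w t * t\<^sup>2)" using i0 i2 by simp
    show "(\<lambda>t. w t * t) \<in> borel_measurable lborel" by measurable
    show "AE t in lborel. norm (w t * t) \<le> norm (w t + w t * t\<^sup>2)"
    proof (rule AE_I2)
      fix t :: real
      have "0 \<le> (\<bar>t\<bar> - 1)\<^sup>2" by simp
      hence "2 * \<bar>t\<bar> \<le> 1 + \<bar>t\<bar>\<^sup>2" by (simp add: power2_eq_square algebra_simps)
      hence "\<bar>t\<bar> \<le> 1 + t\<^sup>2" by simp
      hence "w t * \<bar>t\<bar> \<le> w t * (1 + t\<^sup>2)" using wnn[of t] by (intro mult_left_mono) auto
      thus "norm (w t * t) \<le> norm (w t + w t * t\<^sup>2)" using wnn[of t] by (simp add: abs_mult algebra_simps)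
    qed
  qed
  then show "(LINT t|lborel. w t * t) = 0"
  proof -
    have "(LINT t|lborel. w t * t) = \<bar>-1\<bar> *\<^sub>R (LINT t|lborel. w (0 + (-1) * t) * (0 + (-1) * t))"
      by (rule lborel_integral_real_affine) simp
    also have "\<dots> = - (LINT t|lborel. w t * t)"
    proof -
      have e: "(\<lambda>t. w (0 + (-1) * t) * (0 + (-1) * t)) = (\<lambda>t. - (w t * t))" by (simp add: w_def fun_eq_iff)
      show ?thesis unfolding e by simp
    qed
    finally show ?thesis by simp
  qed
  show "(LINT t|lborel. w t) = 2 * Gamma (1 / r + 1)"
  proof -
    have "ennreal (LINT t|lborel. w t) = ennreal (2 * Gamma (1 / r + 1))"
      using nn_integral_eq_integral[OF i0] wnn n0 by simp
    moreover have "0 \<le> (LINT t|lborel. w t)" using wnn by (simp add: integral_nonneg)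
    moreover have "0 \<le> 2 * Gamma (1 / r + 1)" using r by (intro mult_nonneg_nonneg less_imp_le Gamma_real_pos) (auto intro: add_nonneg_pos)
    ultimately show ?thesis by (simp only: ennreal_inj)
  qed
  show "(LINT t|lborel. w t * t\<^sup>2) = 2 / 3 * Gamma (3 / r + 1)"
  proof -
    have "ennreal (LINT t|lborel. w t * t\<^sup>2) = ennreal (2 / 3 * Gamma (3 / r + 1))"
      using nn_integral_eq_integral[OF i2] wnn n2 by simp
    moreover have "0 \<le> (LINT t|lborel. w t * t\<^sup>2)" using wnn by (simp add: integral_nonneg)
    moreover have "0 \<le> 2 / 3 * Gamma (3 / r + 1)" using r by (intro mult_nonneg_nonneg less_imp_le Gamma_real_pos) (auto intro: add_nonneg_pos)
    ultimately show ?thesis by (simp only: ennreal_inj)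
  qed
qed

lemma lnGamma_conv:
  fixes x y t :: real
  assumes "x > 0" "y > 0" "0 \<le> t" "t \<le> 1"
  shows "ln (Gamma ((1 - t) * x + t * y)) \<le> (1 - t) * ln (Gamma x) + t * ln (Gamma y)"
  using convex_onD[OF log_convex_Gamma_real, of t x y] assms by simp

lemma Gamma_plus1_pos:
  fixes z :: real assumes "z > 0" shows "Gamma (z + 1) = z * Gamma z"
proof (rule Gamma_plus1)
  show "z \<notin> \<int>\<^sub>\<le>\<^sub>0" using assms by (auto elim!: nonpos_Ints_cases)
qed

lemma Gamma_G1:
  fixes z s :: real assumes z: "z > 0" and s: "0 \<le> s" "s \<le> 1"
  shows "Gamma (z + s) \<le> Gamma z * z powr s"
proof -
  have "ln (Gamma ((1 - s) * z + s * (z + 1))) \<le> (1 - s) * ln (Gamma z) + s * ln (Gamma (z + 1))"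
    using z s by (intro lnGamma_conv) auto
  also have "Gamma (z + 1) = z * Gamma z" using z by (simp add: Gamma_plus1_pos)
  also have "ln (z * Gamma z) = ln z + ln (Gamma z)" by (rule ln_mult_pos[OF z Gamma_real_pos[OF z]])
  finally have "ln (Gamma (z + s)) \<le> ln (Gamma z) + s * ln z" by (simp add: algebra_simps)
  hence "exp (ln (Gamma (z + s))) \<le> exp (ln (Gamma z) + s * ln z)" by simp
  also have "exp (ln (Gamma z) + s * ln z) = Gamma z * z powr s"
    using z Gamma_real_pos[OF z] by (simp add: exp_add powr_def mult.commute)
  finally show ?thesis using Gamma_real_pos[of "z + s"] z s by simp
qed

lemma Gamma_G2:
  fixes z s :: real assumes z: "z > 0" and s: "0 \<le> s" "s \<le> 1"
  shows "Gamma (z + 1) \<le> Gamma (z + s) * (z + s) powr (1 - s)"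
proof -
  have zs: "z + s > 0" using z s by simp
  have "ln (Gamma ((1 - (1 - s)) * (z + s) + (1 - s) * (z + s + 1)))
      \<le> (1 - (1 - s)) * ln (Gamma (z + s)) + (1 - s) * ln (Gamma (z + s + 1))"
    using z s by (intro lnGamma_conv) auto
  also have "(1 - (1 - s)) * (z + s) + (1 - s) * (z + s + 1) = z + 1" by (simp add: algebra_simps)
  also have "Gamma (z + s + 1) = (z + s) * Gamma (z + s)" using zs by (simp add: Gamma_plus1_pos)
  also have "ln ((z + s) * Gamma (z + s)) = ln (z + s) + ln (Gamma (z + s))"
    by (rule ln_mult_pos[OF zs Gamma_real_pos[OF zs]])
  finally have "ln (Gamma (z + 1)) \<le> ln (Gamma (z + s)) + (1 - s) * ln (z + s)" by (simp add: algebra_simps)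
  hence "exp (ln (Gamma (z + 1))) \<le> exp (ln (Gamma (z + s)) + (1 - s) * ln (z + s))" by simp
  also have "exp (ln (Gamma (z + s)) + (1 - s) * ln (z + s)) = Gamma (z + s) * (z + s) powr (1 - s)"
    using zs Gamma_real_pos[OF zs] by (simp add: exp_add powr_def mult.commute)
  finally show ?thesis using Gamma_real_pos[of "z + 1"] z by simp
qed

lemma Gamma_ratio_bound:
  fixes a x :: real assumes a: "0 < a" "a \<le> 1/2" and x: "x > 0"
  shows "Gamma (a + 1) / Gamma (3 * a + 1) * (Gamma (x + 2 * a + 1) / Gamma (x + 1))
         \<le> ((x + 1) / a) powr (2 * a)"
proof -
  define s where "s = 2 * a"
  have s: "0 \<le> s" "s \<le> 1" using a by (auto simp: s_def)
  have g1: "Gamma (x + 1 + s) \<le> Gamma (x + 1) * (x + 1) powr s"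
    using Gamma_G1[of "x + 1" s] x s by simp
  have g2: "Gamma (a + 1 + 1) \<le> Gamma (a + 1 + s) * (a + 1 + s) powr (1 - s)"
    using Gamma_G2[of "a + 1" s] a s by simp
  have young: "a powr s * (a + 1 + s) powr (1 - s) \<le> s * a + (1 - s) * (a + 1 + s)"
    using a s by (intro Youngs_inequality_0) auto
  also have "\<dots> \<le> a + 1" using s by (simp add: algebra_simps power2_eq_square[symmetric])
  finally have young': "a powr s * (a + 1 + s) powr (1 - s) \<le> a + 1" .
  have Ga: "Gamma (a + 1) > 0" "Gamma (a + 1 + s) > 0" "Gamma (x + 1) > 0"
    using a x s by (auto intro!: Gamma_real_pos)
  have pp: "(a + 1 + s) powr (1 - s) > 0" using a s by simp
  have lower: "a powr s * Gamma (a + 1) \<le> Gamma (a + 1 + s)"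
  proof -
    have "(a powr s * Gamma (a + 1)) * (a + 1 + s) powr (1 - s) = (a powr s * (a + 1 + s) powr (1 - s)) * Gamma (a + 1)"
      by (simp add: mult_ac)
    also have "\<dots> \<le> (a + 1) * Gamma (a + 1)" using young' Ga by (intro mult_right_mono) auto
    also have "\<dots> = Gamma (a + 1 + 1)" using Gamma_plus1_pos[of "a + 1"] a by argo
    also have "\<dots> \<le> Gamma (a + 1 + s) * (a + 1 + s) powr (1 - s)" by (rule g2)
    finally show ?thesis using pp by (simp add: mult_le_cancel_right)
  qed
  have "Gamma (a + 1) / Gamma (3 * a + 1) = Gamma (a + 1) / Gamma (a + 1 + s)"
    by (simp add: s_def algebra_simps)
  also have "\<dots> \<le> 1 / a powr s"
    using lower Ga a by (simp add: field_simps)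
  finally have A: "Gamma (a + 1) / Gamma (3 * a + 1) \<le> 1 / a powr s" .
  have B: "Gamma (x + 2 * a + 1) / Gamma (x + 1) \<le> (x + 1) powr s"
    using g1 Ga by (simp add: s_def field_simps algebra_simps)
  have "Gamma (a + 1) / Gamma (3 * a + 1) * (Gamma (x + 2 * a + 1) / Gamma (x + 1)) \<le> 1 / a powr s * (x + 1) powr s"
  proof -
    have "0 < Gamma (x + 2 * a + 1)" by (rule Gamma_real_pos) (use a x in simp)
    thus ?thesis using A B Ga a by (intro mult_mono) (auto intro!: divide_nonneg_nonneg less_imp_le)
  qed
  also have "\<dots> = ((x + 1) / a) powr s" using a x by (simp add: powr_divide)
  finally show ?thesis by (simp add: s_def)
qed

lemma sumsq_bound:
  fixes r :: real and x :: "nat \<Rightarrow> real"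
  assumes r: "r \<ge> 2" and d: "d > 0" and N: "Nr r d x \<le> 1"
  shows "(\<Sum>i<d. (x i)\<^sup>2) \<le> real d powr (1 - 2 / r)"
proof -
  have tm: "real d powr (2 / r) * (x i)\<^sup>2 \<le> (2 / r) * (real d * \<bar>x i\<bar> powr r) + (1 - 2 / r)" for i
  proof (cases "x i = 0")
    case True thus ?thesis using r by simp
  next
    case False
    have "(real d * \<bar>x i\<bar> powr r) powr (2 / r) * 1 powr (1 - 2 / r) \<le> (2 / r) * (real d * \<bar>x i\<bar> powr r) + (1 - 2 / r) * 1"
      using r d False by (intro Youngs_inequality_0) auto
    moreover have "(real d * \<bar>x i\<bar> powr r) powr (2 / r) = real d powr (2 / r) * (x i)\<^sup>2"
      using r d False by (simp add: powr_mult powr_powr powr_realpow[symmetric])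
    ultimately show ?thesis by simp
  qed
  have "real d powr (2 / r) * (\<Sum>i<d. (x i)\<^sup>2) = (\<Sum>i<d. real d powr (2 / r) * (x i)\<^sup>2)"
    by (simp add: sum_distrib_left)
  also have "\<dots> \<le> (\<Sum>i<d. (2 / r) * (real d * \<bar>x i\<bar> powr r) + (1 - 2 / r))"
    by (intro sum_mono tm)
  also have "\<dots> = (2 / r) * real d * Nr r d x + real d * (1 - 2 / r)"
    by (simp add: Nr_def sum.distrib sum_distrib_left mult.assoc)
  also have "\<dots> \<le> (2 / r) * real d * 1 + real d * (1 - 2 / r)"
    using N r by (intro add_right_mono mult_left_mono) auto
  also have "\<dots> = real d" by (simp add: algebra_simps)
  finally have "real d powr (2 / r) * (\<Sum>i<d. (x i)\<^sup>2) \<le> real d" .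
  hence "(\<Sum>i<d. (x i)\<^sup>2) \<le> real d / real d powr (2 / r)"
    using d by (simp add: field_simps)
  also have "\<dots> = real d powr (1 - 2 / r)" using d by (simp add: powr_diff)
  finally show ?thesis .
qed

lemma ennreal_solve:
  fixes G M :: real and E :: ennreal
  assumes G: "G > 0" and M: "M \<ge> 0" and eq: "ennreal G * E = ennreal M"
  shows "E = ennreal (M / G)"
proof -
  have "E = ennreal (1 / G) * (ennreal G * E)"
    using G by (simp add: mult.assoc[symmetric] ennreal_mult'[symmetric])
  also have "\<dots> = ennreal (M / G)" using G M by (simp add: eq ennreal_mult'[symmetric])
  finally show ?thesis .
qed

lemma Bp_fin:
  fixes r :: real assumes r: "r > 0"
  shows "Bp d (ereal r) = {x \<in> space (Leb d). Nr r d x \<le> 1}"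
proof -
  have "pnorm (ereal r) d x \<le> 1 \<longleftrightarrow> Nr r d x \<le> 1" for x
  proof -
    have "pnorm (ereal r) d x = \<bar>Nr r d x\<bar> powr (1 / r)"
      by (simp add: pnorm_def Nr_def abs_of_nonneg sum_nonneg)
    also have "\<dots> \<le> 1 \<longleftrightarrow> \<bar>Nr r d x\<bar> \<le> 1" using r by (intro abs_powr_le1) simp
    finally show ?thesis using Nr_nonneg[of r d x] by simp
  qed
  thus ?thesis by (simp add: Bp_def)
qed

lemma alg_aux:
  fixes P g1 g3 gx gx2 :: real and d :: nat
  assumes d: "d > 0" and "g1 > 0" "g3 > 0" "gx > 0" "gx2 > 0"
  shows "real d * P * ((2 * g1) ^ d / gx / (real d * (2 / 3 * g3 * (2 * g1) ^ (d - 1) / gx2)))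
       = 3 * P * (g1 / g3 * (gx2 / gx))"
proof -
  obtain n where dn: "d = Suc n" using d by (cases d) auto
  define q where "q = (2 * g1) ^ n"
  have q: "q > 0" using assms by (simp add: q_def)
  have "(2 * g1) ^ d = 2 * g1 * q" "(2 * g1) ^ (d - 1) = q" by (simp_all add: dn q_def)
  thus ?thesis using assms q by (simp add: field_simps)
qed

lemma finite_case:
  fixes r :: real assumes r2: "r \<ge> 2" and d: "d > 0"
  shows "rad d (Dp d (ereal r)) / (sqrt (real d) * isotropic_constant d (Dp d (ereal r)))
         \<le> sqrt 3 * (1 + r / real d) powr (1 / r)"
proof -
  interpret product_sigma_finite "\<lambda>_. lborel" by standard
  have r: "r > 0" using r2 by simp
  define w where "w = (\<lambda>t::real. exp (- (\<bar>t\<bar> powr r)))"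
  note wf0 = weight_facts[OF r]
  have wf1: "w \<in> borel_measurable borel" unfolding w_def by (rule wf0(1))
  have wf2: "\<And>t. w t \<ge> 0" unfolding w_def by (rule wf0(2))
  have wf3: "integrable lborel w" unfolding w_def by (rule wf0(3))
  have wf4: "integrable lborel (\<lambda>t. w t * t)" unfolding w_def by (rule wf0(4))
  have wf5: "integrable lborel (\<lambda>t. w t * t\<^sup>2)" unfolding w_def by (rule wf0(5))
  have wf6: "(LINT t|lborel. w t * t) = 0" unfolding w_def by (rule wf0(6))
  have wf7: "(LINT t|lborel. w t) = 2 * Gamma (1 / r + 1)" unfolding w_def by (rule wf0(7))
  have wf8: "(LINT t|lborel. w t * t\<^sup>2) = 2 / 3 * Gamma (3 / r + 1)" unfolding w_def by (rule wf0(8))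
  note wf = wf1 wf2 wf3 wf4 wf5 wf6 wf7 wf8
  note wm[measurable] = wf1
  define m0 where "m0 = 2 * Gamma (1 / r + 1)"
  define m2 where "m2 = 2 / 3 * Gamma (3 / r + 1)"
  define G0 where "G0 = Gamma (real d / r + 1)"
  define G2 where "G2 = Gamma ((real d + 2) / r + 1)"
  have m0pos: "m0 > 0" unfolding m0_def using r by (intro mult_pos_pos Gamma_real_pos) (auto intro: add_nonneg_pos)
  have m2pos: "m2 > 0" unfolding m2_def using r by (intro mult_pos_pos Gamma_real_pos) (auto intro: add_nonneg_pos)
  have G0pos: "G0 > 0" unfolding G0_def using r by (intro Gamma_real_pos) (auto intro: add_nonneg_pos)
  have G2pos: "G2 > 0" unfolding G2_def using r by (intro Gamma_real_pos) (auto intro: add_nonneg_pos)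
  define S where "S = {x \<in> space (Leb d). Nr r d x \<le> 1}"
  have Sm[measurable]: "S \<in> sets (Leb d)" unfolding S_def by measurable
  have expN: "exp (- Nr r d x) = (\<Prod>k<d. w (x k))" for x
    by (simp add: Nr_def w_def exp_sum[symmetric] sum_negf)
  have indS: "ennreal (if Nr r d x \<le> 1 then g x else 0) = ennreal (indicator S x * g x)"
    if "x \<in> space (Leb d)" for x and g :: "(nat \<Rightarrow> real) \<Rightarrow> real"
    using that by (simp add: S_def indicator_def)
  have vol: "emeasure (Leb d) S = ennreal (m0 ^ d / G0)"
  proof (rule ennreal_solve[OF G0pos])
    show "0 \<le> m0 ^ d" using m0pos by simp
    have lc: "(\<integral>\<^sup>+x. ennreal (exp (- Nr r d x) * 1) \<partial>Leb d)
       = ennreal (Gamma ((real d + 0) / r + 1)) * (\<integral>\<^sup>+x. ennreal (if Nr r d x \<le> 1 then 1 else 0) \<partial>Leb d)"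
      by (rule layer_cake[OF r]) auto
    have "(\<integral>\<^sup>+x. ennreal (exp (- Nr r d x) * 1) \<partial>Leb d) = (\<integral>\<^sup>+x. (\<Prod>k<d. ennreal (w (x k))) \<partial>Leb d)"
    proof (intro nn_integral_cong)
      fix x :: "nat \<Rightarrow> real"
      show "ennreal (exp (- Nr r d x) * 1) = (\<Prod>k<d. ennreal (w (x k)))"
        using prod_ennreal[of "{..<d}" "\<lambda>k. w (x k)"] wf(2) by (simp add: expN del: prod_ennreal)
    qed
    also have "\<dots> = (\<Prod>k<d. \<integral>\<^sup>+t. ennreal (w t) \<partial>lborel)"
      unfolding Leb_def by (rule product_nn_integral_prod) auto
    also have "(\<integral>\<^sup>+t. ennreal (w t) \<partial>lborel) = ennreal m0"
      using nn_integral_eq_integral[OF wf(3)] wf(2,7) by (simp add: m0_def)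
    finally have l: "(\<integral>\<^sup>+x. ennreal (exp (- Nr r d x) * 1) \<partial>Leb d) = ennreal (m0 ^ d)"
      using m0pos by (simp add: ennreal_power)
    have "(\<integral>\<^sup>+x. ennreal (if Nr r d x \<le> 1 then 1 else 0) \<partial>Leb d) = (\<integral>\<^sup>+x. indicator S x \<partial>Leb d)"
      by (intro nn_integral_cong) (simp add: S_def indicator_def)
    also have "\<dots> = emeasure (Leb d) S" by (rule nn_integral_indicator[OF Sm])
    finally show "ennreal G0 * emeasure (Leb d) S = ennreal (m0 ^ d)"
      using lc l by (simp add: G0_def)
  qed
  have Vmeas: "measure (Leb d) S = m0 ^ d / G0"
    using vol m0pos G0pos by (simp add: measure_def)
  have J: "(\<integral>\<^sup>+x. ennreal (indicator S x * (\<Sum>i<d. x i * \<theta> i)\<^sup>2) \<partial>Leb d) = ennreal (m2 * m0 ^ (d - 1) / G2)"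
    if th: "(\<Sum>i<d. (\<theta> i)\<^sup>2) = 1" for \<theta>
  proof (rule ennreal_solve[OF G2pos])
    show "0 \<le> m2 * m0 ^ (d - 1)" using m0pos m2pos by simp
    have gm: "(\<lambda>x. (\<Sum>i<d. x i * \<theta> i)\<^sup>2) \<in> borel_measurable (Leb d)" unfolding Leb_def by measurable
    have lc: "(\<integral>\<^sup>+x. ennreal (exp (- Nr r d x) * (\<Sum>i<d. x i * \<theta> i)\<^sup>2) \<partial>Leb d)
       = ennreal (Gamma ((real d + 2) / r + 1)) * (\<integral>\<^sup>+x. ennreal (if Nr r d x \<le> 1 then (\<Sum>i<d. x i * \<theta> i)\<^sup>2 else 0) \<partial>Leb d)"
    proof (rule layer_cake[OF r _ gm])
      fix l :: real and x :: "nat \<Rightarrow> real" assume l: "l > 0"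
      have "(\<Sum>i<d. restrict (\<lambda>i. l * x i) {..<d} i * \<theta> i) = l * (\<Sum>i<d. x i * \<theta> i)"
        by (simp add: sum_distrib_left mult.assoc)
      thus "(\<Sum>i<d. restrict (\<lambda>i. l * x i) {..<d} i * \<theta> i)\<^sup>2 = l powr 2 * (\<Sum>i<d. x i * \<theta> i)\<^sup>2"
        using l by (simp add: power_mult_distrib powr_numeral)
    qed auto
    have "(\<integral>\<^sup>+x. ennreal (exp (- Nr r d x) * (\<Sum>i<d. x i * \<theta> i)\<^sup>2) \<partial>Leb d)
        = (\<integral>\<^sup>+x. ennreal ((\<Prod>k<d. w (x k)) * (\<Sum>i<d. x i * \<theta> i)\<^sup>2) \<partial>Leb d)"
      by (simp add: expN)
    also have "\<dots> = ennreal ((\<Sum>i<d. (\<theta> i)\<^sup>2) * (LINT t|lborel. w t * t\<^sup>2) * (LINT t|lborel. w t) ^ (d - 1))"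
      by (rule prod_weight_quadratic_nn[OF d wf(1,2,3,4,5,6)])
    also have "\<dots> = ennreal (m2 * m0 ^ (d - 1))" by (simp add: th wf(7,8) m0_def m2_def)
    finally have l: "(\<integral>\<^sup>+x. ennreal (exp (- Nr r d x) * (\<Sum>i<d. x i * \<theta> i)\<^sup>2) \<partial>Leb d) = ennreal (m2 * m0 ^ (d - 1))" .
    have "(\<integral>\<^sup>+x. ennreal (if Nr r d x \<le> 1 then (\<Sum>i<d. x i * \<theta> i)\<^sup>2 else 0) \<partial>Leb d)
        = (\<integral>\<^sup>+x. ennreal (indicator S x * (\<Sum>i<d. x i * \<theta> i)\<^sup>2) \<partial>Leb d)"
      by (intro nn_integral_cong indS)
    thus "ennreal G2 * (\<integral>\<^sup>+x. ennreal (indicator S x * (\<Sum>i<d. x i * \<theta> i)\<^sup>2) \<partial>Leb d) = ennreal (m2 * m0 ^ (d - 1))"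
      using lc l by (simp add: G2_def)
  qed
  have R: "(\<Sum>i<d. (x i)\<^sup>2) \<le> (sqrt (real d powr (1 - 2 / r)))\<^sup>2" if "x \<in> S" for x
    using sumsq_bound[OF r2 d] that by (simp add: S_def)
  have ne: "S \<noteq> {}"
  proof -
    have "(\<lambda>i\<in>{..<d}. 0::real) \<in> S" by (simp add: S_def Nr_def space_Leb)
    thus ?thesis by blast
  qed
  have Jpos: "m2 * m0 ^ (d - 1) / G2 > 0" using m0pos m2pos G2pos by simp
  have step1: "rad d (Dp d (ereal r)) / (sqrt (real d) * isotropic_constant d (Dp d (ereal r)))
      \<le> sqrt (real d powr (1 - 2 / r)) * sqrt (measure (Leb d) S / (real d * (m2 * m0 ^ (d - 1) / G2)))"
    unfolding Dp_def Bp_fin[OF r] S_def[symmetric]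
    by (rule generic_ratio[OF d Sm _ _ J Jpos R]) (use vol Vmeas m0pos G0pos ne in auto)
  define a where "a = 1 / r"
  define x where "x = real d / r"
  have a: "0 < a" "a \<le> 1/2" using r2 by (auto simp: a_def)
  have xpos: "x > 0" using d r by (simp add: x_def)
  define Q where "Q = Gamma (a + 1) / Gamma (3 * a + 1) * (Gamma (x + 2 * a + 1) / Gamma (x + 1))"
  have Qb: "Q \<le> ((x + 1) / a) powr (2 * a)" unfolding Q_def by (rule Gamma_ratio_bound[OF a xpos])
  define D where "D = real d powr (2 * a)"
  have Dpos: "D > 0" using d by (simp add: D_def)
  have eq: "real d powr (1 - 2 / r) * (measure (Leb d) S / (real d * (m2 * m0 ^ (d - 1) / G2)))
         = 3 * (1 / D) * Q"
  proof -
    have G2': "G2 = Gamma (x + 2 * a + 1)" by (simp add: G2_def x_def a_def add_divide_distrib)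
    have G0': "G0 = Gamma (x + 1)" by (simp add: G0_def x_def)
    have pd: "real d powr (1 - 2 / r) = real d * (1 / D)"
    proof -
      have "real d powr (1 - 2 / r) = real d powr 1 / real d powr (2 / r)" by (rule powr_diff)
      thus ?thesis using d by (simp add: D_def a_def)
    qed
    have ga: "Gamma (1 / r + 1) = Gamma (a + 1)" "Gamma (3 / r + 1) = Gamma (3 * a + 1)" by (simp_all add: a_def)
    have pos: "Gamma (a + 1) > 0" "Gamma (3 * a + 1) > 0" "Gamma (x + 1) > 0" "Gamma (x + 2 * a + 1) > 0"
      using a xpos by (auto intro!: Gamma_real_pos)
    have key: "real d * (1 / D) * ((2 * Gamma (a + 1)) ^ d / Gamma (x + 1)
        / (real d * (2 / 3 * Gamma (3 * a + 1) * (2 * Gamma (a + 1)) ^ (d - 1) / Gamma (x + 2 * a + 1))))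
        = 3 * (1 / D) * (Gamma (a + 1) / Gamma (3 * a + 1) * (Gamma (x + 2 * a + 1) / Gamma (x + 1)))"
      by (rule alg_aux[OF d pos(1) pos(2) pos(3) pos(4)])
    have mS: "measure (Leb d) S = (2 * Gamma (a + 1)) ^ d / Gamma (x + 1)"
      by (simp only: Vmeas m0_def G0' ga)
    have mJ: "m2 * m0 ^ (d - 1) / G2 = 2 / 3 * Gamma (3 * a + 1) * (2 * Gamma (a + 1)) ^ (d - 1) / Gamma (x + 2 * a + 1)"
      by (simp only: m0_def m2_def G2' ga)
    show ?thesis unfolding pd mS mJ Q_def by (rule key)
  qed
  have bound: "real d powr (1 - 2 / r) * (measure (Leb d) S / (real d * (m2 * m0 ^ (d - 1) / G2)))
         \<le> 3 * (1 + r / real d) powr (2 / r)"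
  proof -
    have "3 * (1 / D) * Q \<le> 3 * (1 / D) * ((x + 1) / a) powr (2 * a)"
      using Qb Dpos by (intro mult_left_mono) auto
    also have "3 * (1 / D) * ((x + 1) / a) powr (2 * a) = 3 * (((x + 1) / a) powr (2 * a) / real d powr (2 * a))"
      by (simp add: D_def)
    also have "((x + 1) / a) powr (2 * a) / real d powr (2 * a) = ((x + 1) / a / real d) powr (2 * a)"
      using a xpos by (intro powr_divide[symmetric]; auto)
    also have "(x + 1) / a / real d = 1 + r / real d"
      using d r by (simp add: x_def a_def field_simps)
    also have "2 * a = 2 / r" by (simp add: a_def)
    finally show ?thesis using eq by simp
  qed
  have fin: "sqrt (real d powr (1 - 2 / r)) * sqrt (measure (Leb d) S / (real d * (m2 * m0 ^ (d - 1) / G2)))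
      \<le> sqrt 3 * (1 + r / real d) powr (1 / r)"
  proof -
    have p: "1 + r / real d > 0" using r d by (simp add: add_pos_pos)
    have s1: "sqrt (real d powr (1 - 2 / r)) * sqrt (measure (Leb d) S / (real d * (m2 * m0 ^ (d - 1) / G2)))
      = sqrt (real d powr (1 - 2 / r) * (measure (Leb d) S / (real d * (m2 * m0 ^ (d - 1) / G2))))"
      by (rule real_sqrt_mult[symmetric])
    have s2: "sqrt ((1 + r / real d) powr (2 / r)) = (1 + r / real d) powr (1 / r)"
    proof -
      have "sqrt ((1 + r / real d) powr (2 / r)) = ((1 + r / real d) powr (2 / r)) powr (1/2)"
        using p by (simp add: powr_half_sqrt)
      also have "\<dots> = (1 + r / real d) powr (2 / r * (1/2))" by (rule powr_powr)
      finally show ?thesis by simp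
    qed
    have "sqrt (real d powr (1 - 2 / r) * (measure (Leb d) S / (real d * (m2 * m0 ^ (d - 1) / G2))))
        \<le> sqrt (3 * (1 + r / real d) powr (2 / r))" by (rule real_sqrt_le_mono[OF bound])
    also have "\<dots> = sqrt 3 * (1 + r / real d) powr (1 / r)" by (simp only: real_sqrt_mult s2)
    finally show ?thesis using s1 by simp
  qed
  show ?thesis using step1 fin by linarith
qed

theorem lemma3p2:
  fixes p :: ereal
  assumes "2 \<le> p"
  shows "limsup (\<lambda>d. ereal (rad d (Dp d p) / (sqrt (real d) * isotropic_constant d (Dp d p))))
           \<le> ereal (sqrt 3)"
proof (cases "p = \<infinity>")
  case True
  have "eventually (\<lambda>d. ereal (rad d (Dp d p) / (sqrt (real d) * isotropic_constant d (Dp d p))) \<le> ereal (sqrt 3)) sequentially"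
    using eventually_gt_at_top[of "0::nat"]
    by eventually_elim (use cube_case True in simp)
  thus ?thesis by (rule Limsup_bounded)
next
  case False
  obtain r where pr: "p = ereal r" using False assms by (cases p) auto
  have r2: "r \<ge> 2" using assms pr by simp
  define b where "b d = sqrt 3 * (1 + r / real d) powr (1 / r)" for d :: nat
  have ev: "eventually (\<lambda>d. ereal (rad d (Dp d p) / (sqrt (real d) * isotropic_constant d (Dp d p))) \<le> ereal (b d)) sequentially"
    using eventually_gt_at_top[of "0::nat"]
    by eventually_elim (use finite_case[OF r2] pr in \<open>simp add: b_def\<close>)
  have lim: "(\<lambda>d. ereal (b d)) \<longlonglongrightarrow> ereal (sqrt 3)"
  proof -
    have "(\<lambda>d. r / real d) \<longlonglongrightarrow> 0" by (rule lim_const_over_n)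
    hence "(\<lambda>d. 1 + r / real d) \<longlonglongrightarrow> 1 + 0" by (intro tendsto_add tendsto_const)
    hence "(\<lambda>d. (1 + r / real d) powr (1 / r)) \<longlonglongrightarrow> (1 + 0) powr (1 / r)"
      by (intro tendsto_powr tendsto_const) auto
    hence "(\<lambda>d. sqrt 3 * (1 + r / real d) powr (1 / r)) \<longlonglongrightarrow> sqrt 3 * (1 + 0) powr (1 / r)"
      by (intro tendsto_mult tendsto_const)
    hence "b \<longlonglongrightarrow> sqrt 3" by (simp add: b_def[abs_def])
    thus ?thesis by (rule tendsto_ereal)
  qed
  have "limsup (\<lambda>d. ereal (rad d (Dp d p) / (sqrt (real d) * isotropic_constant d (Dp d p))))
      \<le> limsup (\<lambda>d. ereal (b d))" by (rule Limsup_mono[OF ev])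
  also have "\<dots> = ereal (sqrt 3)" by (rule lim_imp_Limsup[OF trivial_limit_sequentially lim])
  finally show ?thesis .
qed

end
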